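(* Let the perturbation parameters $\delta_i^j\ge0$ satisfy $0<\delta^1\le\delta^2\le\dots\le\delta^S$, where $\delta^j:=\sum_{i=1}^C\delta_i^j$. Let $t\mapsto\zeta(t)=(\xi(t),\eta(t))$, $t\in I$, be a solution of $(\mathrm P_\delta)$ such that for all $t\in I$: $\epsilon(t)\neq0$; $n^j(t)\neq0$ and $V^j(t)>0$ for $j=1,\dots,S$; $L^j(t)>0$ and $f_{\mathrm{holdup}}'(L^j(t))\neq0$ for $j=1,\dots,S-1$; and $\partial_Tf_{\mathrm{hl}}(T^j(t),\mathbf x^j(t))\neq0$ for $j=1,\dots,S$. Then the Jacobian $D_\eta g_\delta(\zeta(t))$ is non-singular for every $t\in I$. Moreover, along the solution, $\sum_{i=1}^Cy_i^j=1+\delta^j-\frac{1}{V^j}\Big(\sum_{k=1}^{j}L^k\delta^k-\sum_{k=1}^{j-1}V^k(\delta^k-\delta^{k+1})\Big)$ for $j=1,\dots,S-1$, and $\sum_{i=1}^Cy_i^S=1+\delta^S-\frac{1}{\epsilon V^S}\Big(\sum_{k=1}^{S-1}L^k\delta^k-\sum_{k=1}^{S-1}V^k(\delta^k-\delta^{k+1})\Big)$.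
   Context: Fix integers $S\ge 2$, $C\ge 2$ and an interval $I\subset\mathbb R$. Given are continuously differentiable real functions $f_{\mathrm{vle},i}(P,T,\mathbf x)$ ($i=1,\dots,C$), $f_{\mathrm{hl}}(T,\mathbf x)$, $f_{\mathrm{hv}}(T,\mathbf y)$, $f_{\mathrm{holdup}}(L)$. Controls are continuously differentiable real functions $\epsilon,P,Q,T^{\mathrm{cond}}$ on $I$. State variables: $n^j,H^j,T^j,V^j$, $\mathbf x^j,\mathbf y^j\in\mathbb R^C$ ($j=1,\dots,S$), $L^j$ ($j=1,\dots,S-1$); a solution is a tuple of continuously differentiable state functions satisfying all equations at every $t\in I$. "$2\le j\le S-1$" marks middle-stage equations. For parameters $\delta_i^j\ge0$, the system $(\mathrm P_\delta)$ consists of: (TM) $\dot n^1=L^1-V^1$; $\dot n^j=L^j-V^j-L^{j-1}+V^{j-1}$ ($2\le j\le S-1$); $\dot n^S=-\epsilon V^S-L^{S-1}+V^{S-1}$; (CM$_\delta$) for $i=1,\dots,C-1$: $\dot x_i^1=\big(L^1(x_i^2-x_i^1-\delta_i^1)-V^1(y_i^1-x_i^1-\delta_i^1)\big)/n^1$; $\dot x_i^j=\big(L^j(x_i^{j+1}-x_i^j-\delta_i^j)-V^j(y_i^j-x_i^j-\delta_i^j)+V^{j-1}(y_i^{j-1}-x_i^j-\delta_i^j)\big)/n^j$ ($2\le j\le S-1$); $\dot x_i^S=\big(\epsilon V^S(x_i^S+\delta_i^S-y_i^S)+V^{S-1}(y_i^{S-1}-x_i^S-\delta_i^S)\big)/n^S$;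 (EB) $\dot H^1=L^1f_{\mathrm{hl}}(T^2,\mathbf x^2)-V^1f_{\mathrm{hv}}(T^1,\mathbf y^1)+Q$; $\dot H^j=L^jf_{\mathrm{hl}}(T^{j+1},\mathbf x^{j+1})-V^jf_{\mathrm{hv}}(T^j,\mathbf y^j)-L^{j-1}f_{\mathrm{hl}}(T^j,\mathbf x^j)+V^{j-1}f_{\mathrm{hv}}(T^{j-1},\mathbf y^{j-1})$ ($2\le j\le S-1$); $\dot H^S=(1-\epsilon)V^Sf_{\mathrm{hl}}(T^{\mathrm{cond}},\mathbf y^S)-V^Sf_{\mathrm{hv}}(T^S,\mathbf y^S)-L^{S-1}f_{\mathrm{hl}}(T^S,\mathbf x^S)+V^{S-1}f_{\mathrm{hv}}(T^{S-1},\mathbf y^{S-1})$; and the algebraic equations $g_\delta=0$, where $\mathrm{aux}^1_\delta=\sum_{i=1}^C\big(L^1(x_i^2-x_i^1-\delta_i^1)-V^1(y_i^1-x_i^1-\delta_i^1)\big)/n^1$; for $2\le j\le S-1$, $\mathrm{aux}^j_\delta=\sum_{i=1}^C\big(L^j(x_i^{j+1}-x_i^j-\delta_i^j)-V^j(y_i^j-x_i^j-\delta_i^j)+V^{j-1}(y_i^{j-1}-x_i^j-\delta_i^j)\big)/n^j$; $\mathrm{aux}^S_\delta=\sum_{i=1}^C\big(\epsilon V^S(x_i^S+\delta_i^S-y_i^S)+V^{S-1}(y_i^{S-1}-x_i^S-\delta_i^S)\big)/n^S$; $\mathrm{ydef}_i^j=y_i^j-f_{\mathrm{vle},i}(P,T^j,\mathbf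 x^j)$; $\mathrm{edef}^j=H^j-n^jf_{\mathrm{hl}}(T^j,\mathbf x^j)$; $\mathrm{xsum}^j=x_C^j-1+\sum_{i=1}^{C-1}x_i^j$; $\mathrm{hold}^j=n^j-f_{\mathrm{holdup}}(L^{j-1})$ ($j=2,\dots,S$); collected as $g_\delta=(\mathrm{aux}^S_\delta,\dots,\mathrm{aux}^1_\delta,\mathbf{ydef}^1,\dots,\mathbf{ydef}^S,\mathrm{edef}^1,\dots,\mathrm{edef}^S,\mathrm{xsum}^1,\dots,\mathrm{xsum}^S,\mathrm{hold}^2,\dots,\mathrm{hold}^S)$ with $\mathbf{ydef}^j=(\mathrm{ydef}^j_1,\dots,\mathrm{ydef}^j_C)$. Differential variables $\xi=(n^1,\dots,n^S,\hat{\mathbf x}^1,\dots,\hat{\mathbf x}^S,H^1,\dots,H^S)$, $\hat{\mathbf x}^j=(x_1^j,\dots,x_{C-1}^j)$; algebraic variables $\eta=(V^S,\dots,V^1,\mathbf y^1,\dots,\mathbf y^S,T^1,\dots,T^S,x_C^1,\dots,x_C^S,L^1,\dots,L^{S-1})$. $D_\eta g_\delta$ is the Jacobian of $g_\delta$ with respect to $\eta$ (with $\xi$ and the controls held fixed). *)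

theory Defs
  imports "HOL-Analysis.Analysis"
begin

text \<open>Components i = 1..C are indexed by a finite type 'c (CARD('c) = C) with a
  distinguished element cC playing the role of the C-th component; stages j are
  natural numbers 1..S.\<close>

datatype 'c avar = AV nat | AY nat 'c | AT nat | AX nat | AL nat
datatype 'c geqn = EAux nat | EYdef nat 'c | EEdef nat | EXsum nat | EHold nat

definition avars :: "nat \<Rightarrow> 'c avar set" where
  "avars S = {AV j | j. j \<in> {1..S}} \<union> {AY j i | j i. j \<in> {1..S}} \<union> {AT j | j. j \<in> {1..S}}
     \<union> {AX j | j. j \<in> {1..S}} \<union> {AL j | j. j \<in> {1..<S}}"

definition geqns :: "nat \<Rightarrow> 'c geqn set" where
  "geqns S = {EAux j | j. j \<in> {1..S}} \<union> {EYdef j i | j i. j \<in> {1..S}} \<union> {EEdef j | j. j \<in> {1..S}}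
     \<union> {EXsum j | j. j \<in> {1..S}} \<union> {EHold j | j. j \<in> {2..S}}"

definition C1_map :: "('a::real_normed_vector \<Rightarrow> 'b::real_normed_vector) \<Rightarrow> bool" where
  "C1_map f \<longleftrightarrow> (\<exists>f'. (\<forall>z. (f has_derivative blinfun_apply (f' z)) (at z)) \<and> continuous_on UNIV f')"

definition C1_on :: "real set \<Rightarrow> (real \<Rightarrow> 'b::real_normed_vector) \<Rightarrow> bool" where
  "C1_on I u \<longleftrightarrow> (\<exists>u'. (\<forall>t\<in>I. (u has_vector_derivative u' t) (at t within I)) \<and> continuous_on I u')"

definition dsum :: "(nat \<Rightarrow> 'c::finite \<Rightarrow> real) \<Rightarrow> nat \<Rightarrow> real" where
  "dsum \<delta> j = (\<Sum>i\<in>UNIV. \<delta> j i)"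

text \<open>The algebraic equations g_delta, as a function of the differential variables
  (n, H and the components x_i^j, i \<noteq> cC, taken from xh), the controls eps, P and the
  algebraic variables eta.\<close>
definition g_delta :: "nat \<Rightarrow> 'c::finite \<Rightarrow> (nat \<Rightarrow> 'c \<Rightarrow> real)
    \<Rightarrow> ('c \<Rightarrow> real \<Rightarrow> real \<Rightarrow> real^'c \<Rightarrow> real) \<Rightarrow> (real \<Rightarrow> real^'c \<Rightarrow> real) \<Rightarrow> (real \<Rightarrow> real)
    \<Rightarrow> real \<Rightarrow> real \<Rightarrow> (nat \<Rightarrow> real) \<Rightarrow> (nat \<Rightarrow> real) \<Rightarrow> (nat \<Rightarrow> real^'c)
    \<Rightarrow> ('c avar \<Rightarrow> real) \<Rightarrow> 'c geqn \<Rightarrow> real" where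
  "g_delta S cC \<delta> fvle fhl fhold eps P n H xh \<eta> r =
    (let V = (\<lambda>j. \<eta> (AV j));
         y = (\<lambda>j. \<chi> i. \<eta> (AY j i));
         T = (\<lambda>j. \<eta> (AT j));
         x = (\<lambda>j. \<chi> i. if i = cC then \<eta> (AX j) else xh j $ i);
         L = (\<lambda>j. \<eta> (AL j))
     in case r of
       EAux j \<Rightarrow>
         (if j = 1 then
            (\<Sum>i\<in>UNIV. L 1 * (x 2 $ i - x 1 $ i - \<delta> 1 i) - V 1 * (y 1 $ i - x 1 $ i - \<delta> 1 i)) / n 1
          else if j = S then
            (\<Sum>i\<in>UNIV. eps * V S * (x S $ i + \<delta> S i - y S $ i)
                        + V (S-1) * (y (S-1) $ i - x S $ i - \<delta> S i)) / n S
          else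
            (\<Sum>i\<in>UNIV. L j * (x (j+1) $ i - x j $ i - \<delta> j i) - V j * (y j $ i - x j $ i - \<delta> j i)
                        + V (j-1) * (y (j-1) $ i - x j $ i - \<delta> j i)) / n j)
     | EYdef j i \<Rightarrow> y j $ i - fvle i P (T j) (x j)
     | EEdef j \<Rightarrow> H j - n j * fhl (T j) (x j)
     | EXsum j \<Rightarrow> x j $ cC - 1 + (\<Sum>i\<in>UNIV - {cC}. x j $ i)
     | EHold j \<Rightarrow> n j - fhold (L (j-1)))"

definition jac_eta :: "nat \<Rightarrow> 'c::finite \<Rightarrow> (nat \<Rightarrow> 'c \<Rightarrow> real)
    \<Rightarrow> ('c \<Rightarrow> real \<Rightarrow> real \<Rightarrow> real^'c \<Rightarrow> real) \<Rightarrow> (real \<Rightarrow> real^'c \<Rightarrow> real) \<Rightarrow> (real \<Rightarrow> real)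
    \<Rightarrow> real \<Rightarrow> real \<Rightarrow> (nat \<Rightarrow> real) \<Rightarrow> (nat \<Rightarrow> real) \<Rightarrow> (nat \<Rightarrow> real^'c)
    \<Rightarrow> ('c avar \<Rightarrow> real) \<Rightarrow> 'c geqn \<Rightarrow> 'c avar \<Rightarrow> real" where
  "jac_eta S cC \<delta> fvle fhl fhold eps P n H xh \<eta> r c =
     deriv (\<lambda>s. g_delta S cC \<delta> fvle fhl fhold eps P n H xh (\<eta>(c := s)) r) (\<eta> c)"

definition nonsingular_on :: "('r \<Rightarrow> 'v \<Rightarrow> real) \<Rightarrow> 'r set \<Rightarrow> 'v set \<Rightarrow> bool" where
  "nonsingular_on J R Cs \<longleftrightarrow> finite R \<and> finite Cs \<and> card R = card Cs \<and>
     (\<forall>v. (\<forall>r\<in>R. (\<Sum>c\<in>Cs. J r c * v c) = 0) \<longrightarrow> (\<forall>c\<in>Cs. v c = 0))"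

definition eta_sol :: "'c \<Rightarrow> (nat \<Rightarrow> real \<Rightarrow> real) \<Rightarrow> (nat \<Rightarrow> real \<Rightarrow> real^'c) \<Rightarrow> (nat \<Rightarrow> real \<Rightarrow> real)
    \<Rightarrow> (nat \<Rightarrow> real \<Rightarrow> real^'c) \<Rightarrow> (nat \<Rightarrow> real \<Rightarrow> real) \<Rightarrow> real \<Rightarrow> 'c avar \<Rightarrow> real" where
  "eta_sol cC V y T x L t c = (case c of AV j \<Rightarrow> V j t | AY j i \<Rightarrow> y j t $ i | AT j \<Rightarrow> T j t
      | AX j \<Rightarrow> x j t $ cC | AL j \<Rightarrow> L j t)"

end

theory Submission
  imports Defs
begin


lemma deriv_affine: assumes "\<And>s. F s = a + s * (b::real)" shows "deriv F z = b"
proof -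
  have "F = (\<lambda>s. a + s * b)" using assms by auto
  moreover have "((\<lambda>s. a + s * b) has_real_derivative b) (at z)"
    by (auto intro!: derivative_eq_intros)
  ultimately show ?thesis by (simp add: DERIV_imp_deriv)
qed

lemma deriv_constfun: assumes "\<And>s. F s = F z" shows "deriv F z = 0"
proof -
  have "F = (\<lambda>s. F z)" using assms by auto
  then show ?thesis by (metis deriv_const)
qed

lemma vec_rec: "(\<chi> i. if i = c then v $ c else v $ i) = v"
  by (simp add: vec_eq_iff)

context
  fixes S :: nat and cC :: "'c::finite" and \<delta> :: "nat \<Rightarrow> 'c \<Rightarrow> real"
    and fvle :: "'c \<Rightarrow> real \<Rightarrow> real \<Rightarrow> real^'c \<Rightarrow> real"
    and fhl :: "real \<Rightarrow> real^'c \<Rightarrow> real" and fhold :: "real \<Rightarrow> real"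
    and e p :: real and nn HH :: "nat \<Rightarrow> real" and xh :: "nat \<Rightarrow> real^'c"
begin

abbreviation "gg \<equiv> g_delta S cC \<delta> fvle fhl fhold e p nn HH xh"

lemma c_xsum: "c \<noteq> AX j \<Longrightarrow> gg (\<eta>(c:=s)) (EXsum j) = gg \<eta> (EXsum j)"
  by (auto cong: if_cong simp add: g_delta_def Let_def)

lemma c_hold: "c \<noteq> AL (j-1) \<Longrightarrow> gg (\<eta>(c:=s)) (EHold j) = gg \<eta> (EHold j)"
  by (auto cong: if_cong simp add: g_delta_def Let_def)

lemma c_edef: "c \<noteq> AT j \<Longrightarrow> c \<noteq> AX j \<Longrightarrow> gg (\<eta>(c:=s)) (EEdef j) = gg \<eta> (EEdef j)"
proof -
  assume a: "c \<noteq> AT j" "c \<noteq> AX j"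
  have h: "(\<eta>(c:=s))(AX j) = \<eta>(AX j)" "(\<eta>(c:=s))(AT j) = \<eta>(AT j)" using a by auto
  show ?thesis using a by (auto cong: if_cong simp add: g_delta_def Let_def)
qed

lemma c_ydef: "c \<noteq> AY j i \<Longrightarrow> c \<noteq> AT j \<Longrightarrow> c \<noteq> AX j \<Longrightarrow> gg (\<eta>(c:=s)) (EYdef j i) = gg \<eta> (EYdef j i)"
proof -
  assume a: "c \<noteq> AY j i" "c \<noteq> AT j" "c \<noteq> AX j"
  have h: "(\<eta>(c:=s))(AX j) = \<eta>(AX j)" "(\<eta>(c:=s))(AT j) = \<eta>(AT j)" "(\<eta>(c:=s))(AY j i) = \<eta>(AY j i)" using a by auto
  show ?thesis using a by (auto cong: if_cong simp add: g_delta_def Let_def)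
qed

lemma c_aux: "k \<noteq> j \<Longrightarrow> k \<noteq> j - 1 \<Longrightarrow> gg (\<eta>(AV k:=s)) (EAux j) = gg \<eta> (EAux j)"
  by (auto cong: if_cong simp add: g_delta_def Let_def)

lemma d_xsum: "deriv (\<lambda>s. gg (\<eta>(AX j:=s)) (EXsum j)) z = 1"
  by (rule deriv_affine[where a = "- 1 + (\<Sum>i\<in>UNIV - {cC}. xh j $ i)"]) (auto cong: if_cong simp add: g_delta_def Let_def)

lemma d_ydef: "deriv (\<lambda>s. gg (\<eta>(AY j i:=s)) (EYdef j i)) z = 1"
  by (rule deriv_affine[where a = "- fvle i p (\<eta> (AT j)) (\<chi> i. if i = cC then \<eta> (AX j) else xh j $ i)"]) (simp cong: if_cong add: g_delta_def Let_def)

lemma d_hold: assumes "fhold differentiable at z"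
  shows "deriv (\<lambda>s. gg (\<eta>(AL (j-1):=s)) (EHold j)) z = - deriv fhold z"
proof -
  have e: "(\<lambda>s. gg (\<eta>(AL (j-1):=s)) (EHold j)) = (\<lambda>s. nn j - fhold s)"
    by (auto cong: if_cong simp add: g_delta_def Let_def)
  have "((\<lambda>s. nn j - fhold s) has_real_derivative (0 - deriv fhold z)) (at z)"
    using assms by (intro derivative_intros) (simp add: DERIV_deriv_iff_real_differentiable)
  then show ?thesis unfolding e by (simp add: DERIV_imp_deriv)
qed

lemma d_edef: assumes "(\<lambda>tt. fhl tt X) differentiable at z"
  and "X = (\<chi> i. if i = cC then \<eta> (AX j) else xh j $ i)"
  shows "deriv (\<lambda>s. gg (\<eta>(AT j:=s)) (EEdef j)) z = - nn j * deriv (\<lambda>tt. fhl tt X) z"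
proof -
  have e: "(\<lambda>s. gg (\<eta>(AT j:=s)) (EEdef j)) = (\<lambda>s. HH j - nn j * fhl s X)"
    using assms(2) by (simp cong: if_cong add: g_delta_def Let_def)
  have "((\<lambda>s. HH j - nn j * fhl s X) has_real_derivative (0 - nn j * deriv (\<lambda>tt. fhl tt X) z)) (at z)"
    using assms(1) by (intro derivative_intros DERIV_cmult) (simp_all add: DERIV_deriv_iff_real_differentiable)
  then show ?thesis unfolding e by (simp add: DERIV_imp_deriv)
qed

lemma aff1: "(\<Sum>i\<in>A. (a i::real) - s * b i) / n = (\<Sum>i\<in>A. a i) / n + s * (- (\<Sum>i\<in>A. b i) / n)"
  by (simp add: sum_subtractf sum_distrib_left[symmetric] diff_divide_distrib)

lemma aff2: "(\<Sum>i\<in>A. (a i::real) - s * b i + c i) / n = (\<Sum>i\<in>A. a i + c i) / n + s * (- (\<Sum>i\<in>A. b i) / n)"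
  by (simp add: sum_subtractf sum.distrib sum_distrib_left[symmetric] diff_divide_distrib add_divide_distrib)

lemma aff3: "(\<Sum>i\<in>A. e * s * (b i::real) + c i) / n = (\<Sum>i\<in>A. c i) / n + s * (e * (\<Sum>i\<in>A. b i) / n)"
  by (simp add: sum.distrib sum_distrib_left[symmetric] add_divide_distrib algebra_simps)

lemma d_aux1: assumes "S \<noteq> 1"
  shows "deriv (\<lambda>s. gg (\<eta>(AV 1:=s)) (EAux 1)) z =
    - (\<Sum>i\<in>UNIV. \<eta> (AY 1 i) - (\<chi> i. if i = cC then \<eta> (AX 1) else xh 1 $ i) $ i - \<delta> 1 i) / nn 1"
  apply (rule deriv_affine)
  apply (simp cong: if_cong add: g_delta_def Let_def aff1)
  done

lemma d_auxj: assumes "j \<noteq> 1" "j \<noteq> S" "j \<noteq> 0"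
  shows "deriv (\<lambda>s. gg (\<eta>(AV j:=s)) (EAux j)) z =
    - (\<Sum>i\<in>UNIV. \<eta> (AY j i) - (\<chi> i. if i = cC then \<eta> (AX j) else xh j $ i) $ i - \<delta> j i) / nn j"
proof -
  have h: "j - Suc 0 \<noteq> j" using assms by simp
  show ?thesis
  apply (rule deriv_affine)
  using assms h apply (simp cong: if_cong add: g_delta_def Let_def aff2)
  done
qed

lemma d_auxS: assumes "S \<noteq> 1" "S \<noteq> 0"
  shows "deriv (\<lambda>s. gg (\<eta>(AV S:=s)) (EAux S)) z =
    e * (\<Sum>i\<in>UNIV. (\<chi> i. if i = cC then \<eta> (AX S) else xh S $ i) $ i + \<delta> S i - \<eta> (AY S i)) / nn S"
proof -
  have h: "S - Suc 0 \<noteq> S" using assms by simp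
  show ?thesis
  apply (rule deriv_affine)
  using assms h apply (simp cong: if_cong add: g_delta_def Let_def aff3)
  done
qed

end



lemma avars_eq: "avars S = AV ` {1..S} \<union> (\<lambda>(j,i). AY j i) ` ({1..S} \<times> UNIV) \<union> AT ` {1..S} \<union> AX ` {1..S} \<union> AL ` {1..<S}"
  unfolding avars_def by auto

lemma finite_avars: "finite (avars (S::nat) :: ('c::finite) avar set)"
  unfolding avars_eq by auto

lemma card_eq: "card (geqns S :: ('c::finite) geqn set) = card (avars S :: 'c avar set)"
proof -
  define f :: "'c geqn \<Rightarrow> 'c avar" where "f = case_geqn AV AY AT AX (\<lambda>j. AL (j-1))"
  have "bij_betw f (geqns S) (avars S)"
    unfolding bij_betw_def
  proof
    show "inj_on f (geqns S)"
      unfolding inj_on_def geqns_def f_def by auto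
    show "f ` geqns S = avars S"
    proof
      show "f ` geqns S \<subseteq> avars S" unfolding geqns_def avars_def f_def by auto
      show "avars S \<subseteq> f ` geqns S"
      proof
        fix c :: "'c avar" assume "c \<in> avars S"
        then show "c \<in> f ` geqns S" unfolding avars_def
        proof (elim UnE)
          assume "c \<in> {AL j |j. j \<in> {1..<S}}"
          then obtain j where "c = AL j" "j \<in> {1..<S}" by auto
          then have "c = f (EHold (j+1))" "EHold (j+1) \<in> geqns S" unfolding f_def geqns_def by auto
          then show ?thesis by blast
        next
          assume "c \<in> {AV j |j. j \<in> {1..S}}"
          then obtain j where "c = AV j" "j \<in> {1..S}" by auto
          then have "c = f (EAux j)" "EAux j \<in> geqns S" unfolding f_def geqns_def by auto
          then show ?thesis by blast
        next
          assume "c \<in> {AY j i |j i. j \<in> {1..S}}"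
          then obtain j i where "c = AY j i" "j \<in> {1..S}" by auto
          then have "c = f (EYdef j i)" "EYdef j i \<in> geqns S" unfolding f_def geqns_def by auto
          then show ?thesis by blast
        next
          assume "c \<in> {AT j |j. j \<in> {1..S}}"
          then obtain j where "c = AT j" "j \<in> {1..S}" by auto
          then have "c = f (EEdef j)" "EEdef j \<in> geqns S" unfolding f_def geqns_def by auto
          then show ?thesis by blast
        next
          assume "c \<in> {AX j |j. j \<in> {1..S}}"
          then obtain j where "c = AX j" "j \<in> {1..S}" by auto
          then have "c = f (EXsum j)" "EXsum j \<in> geqns S" unfolding f_def geqns_def by auto
          then show ?thesis by blast
        qed
      qed
    qed
  qed
  then show ?thesis by (rule bij_betw_same_card)
qed

lemma finite_geqns: "finite (geqns (S::nat) :: ('c::finite) geqn set)"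
proof -
  have "(geqns S :: 'c geqn set) = EAux ` {1..S} \<union> (\<lambda>(j,i). EYdef j i) ` ({1..S} \<times> UNIV) \<union> EEdef ` {1..S} \<union> EXsum ` {1..S} \<union> EHold ` {2..S}"
    unfolding geqns_def by auto
  then show ?thesis by (simp only:) auto
qed

lemma row_reduce:
  assumes "finite A" "c0 \<in> A"
    and "\<And>c. c \<in> A \<Longrightarrow> c \<noteq> c0 \<Longrightarrow> (\<forall>s. G (\<eta>(c:=s)) = (G \<eta> :: real)) \<or> v c = 0"
  shows "(\<Sum>c\<in>A. deriv (\<lambda>s. G (\<eta>(c:=s))) (\<eta> c) * v c) = deriv (\<lambda>s. G (\<eta>(c0:=s))) (\<eta> c0) * v c0"
proof -
  have z: "\<forall>c\<in>A - {c0}. deriv (\<lambda>s. G (\<eta>(c := s))) (\<eta> c) * v c = 0"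
  proof
    fix c assume c: "c \<in> A - {c0}"
    show "deriv (\<lambda>s. G (\<eta>(c := s))) (\<eta> c) * v c = 0"
    proof (cases "v c = 0")
      case False
      with assms(3) c have h: "\<forall>s. G (\<eta>(c:=s)) = G \<eta>" by auto
      have "deriv (\<lambda>s. G (\<eta>(c := s))) (\<eta> c) = 0"
        by (rule deriv_constfun) (simp add: h)
      then show ?thesis by simp
    qed simp
  qed
  show ?thesis using sum.remove[OF assms(1,2), of "\<lambda>c. deriv (\<lambda>s. G (\<eta>(c := s))) (\<eta> c) * v c"]
    sum.neutral[OF z] by simp
qed

lemma C1_diff: assumes "C1_map f" shows "f differentiable at z"
  using assms unfolding C1_map_def differentiable_def by blast

lemma C1_partial: assumes "C1_map (\<lambda>(tt::real, xx::real^'c). f tt xx)"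
  shows "(\<lambda>tt. f tt X) differentiable at z"
proof -
  have "(\<lambda>(tt::real, xx::real^'c). f tt xx) differentiable at ((\<lambda>tt. (tt, X)) z)"
    using C1_diff[OF assms] by blast
  moreover have "(\<lambda>tt. (tt, X)) differentiable at z"
    by (intro derivative_intros)
  ultimately have "((\<lambda>(tt::real, xx::real^'c). f tt xx) \<circ> (\<lambda>tt. (tt, X))) differentiable at z"
    using differentiable_chain_at by blast
  then show ?thesis by (simp add: o_def)
qed

lemma sumA: "(\<Sum>i\<in>A. L * (a i - b i - c i) - V * (d i - b i - c i)) =
   (L::real) * (sum a A - sum b A - sum c A) - V * (sum d A - sum b A - sum c A)"
  by (simp add: sum_subtractf sum.distrib sum_distrib_left algebra_simps)

lemma sumB: "(\<Sum>i\<in>A. L * (a i - b i - c i) - V * (d i - b i - c i) + W * (e i - b i - c i)) =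
   (L::real) * (sum a A - sum b A - sum c A) - V * (sum d A - sum b A - sum c A) + W * (sum e A - sum b A - sum c A)"
  by (simp add: sum_subtractf sum.distrib sum_distrib_left algebra_simps)

lemma sumC: "(\<Sum>i\<in>A. E * V * (b i + c i - d i) + W * (e i - b i - c i)) =
   (E::real) * V * (sum b A + sum c A - sum d A) + W * (sum e A - sum b A - sum c A)"
  by (simp add: sum_subtractf sum.distrib sum_distrib_left algebra_simps)




theorem mainTheorem6:
  fixes S :: nat and cC :: "'c::finite" and I :: "real set"
    and \<delta> :: "nat \<Rightarrow> 'c \<Rightarrow> real"
    and fvle :: "'c \<Rightarrow> real \<Rightarrow> real \<Rightarrow> real^'c \<Rightarrow> real"
    and fhl fhv :: "real \<Rightarrow> real^'c \<Rightarrow> real" and fhold :: "real \<Rightarrow> real"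
    and eps P Q Tc :: "real \<Rightarrow> real"
    and n H T V L :: "nat \<Rightarrow> real \<Rightarrow> real" and x y :: "nat \<Rightarrow> real \<Rightarrow> real^'c"
  assumes S2: "S \<ge> 2" and C2: "CARD('c) \<ge> 2" and I_int: "is_interval I"
    and fvle_C1: "\<forall>i. C1_map (\<lambda>(p::real, tt::real, xx::real^'c). fvle i p tt xx)"
    and fhl_C1: "C1_map (\<lambda>(tt::real, xx::real^'c). fhl tt xx)"
    and fhv_C1: "C1_map (\<lambda>(tt::real, xx::real^'c). fhv tt xx)"
    and fhold_C1: "C1_map fhold"
    and ctrl_C1: "C1_on I eps" "C1_on I P" "C1_on I Q" "C1_on I Tc"
    and state_C1: "\<forall>j\<in>{1..S}. C1_on I (n j) \<and> C1_on I (H j) \<and> C1_on I (T j) \<and> C1_on I (V j)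
                     \<and> C1_on I (x j) \<and> C1_on I (y j)"
    and L_C1: "\<forall>j\<in>{1..<S}. C1_on I (L j)"
    and \<delta>_nonneg: "\<forall>j\<in>{1..S}. \<forall>i. \<delta> j i \<ge> 0"
    and \<delta>_pos: "0 < dsum \<delta> 1"
    and \<delta>_mono: "\<forall>j\<in>{1..<S}. dsum \<delta> j \<le> dsum \<delta> (j+1)"
    (* (TM) *)
    and TM1: "\<forall>t\<in>I. (n 1 has_real_derivative (L 1 t - V 1 t)) (at t within I)"
    and TMj: "\<forall>t\<in>I. \<forall>j\<in>{2..S-1}. (n j has_real_derivative
                 (L j t - V j t - L (j-1) t + V (j-1) t)) (at t within I)"
    and TMS: "\<forall>t\<in>I. (n S has_real_derivative
                 (- eps t * V S t - L (S-1) t + V (S-1) t)) (at t within I)"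
    (* (CM_delta) *)
    and CM1: "\<forall>t\<in>I. \<forall>i. i \<noteq> cC \<longrightarrow> ((\<lambda>s. x 1 s $ i) has_real_derivative
                 (L 1 t * (x 2 t $ i - x 1 t $ i - \<delta> 1 i) - V 1 t * (y 1 t $ i - x 1 t $ i - \<delta> 1 i)) / n 1 t)
                 (at t within I)"
    and CMj: "\<forall>t\<in>I. \<forall>j\<in>{2..S-1}. \<forall>i. i \<noteq> cC \<longrightarrow> ((\<lambda>s. x j s $ i) has_real_derivative
                 (L j t * (x (j+1) t $ i - x j t $ i - \<delta> j i) - V j t * (y j t $ i - x j t $ i - \<delta> j i)
                  + V (j-1) t * (y (j-1) t $ i - x j t $ i - \<delta> j i)) / n j t) (at t within I)"
    and CMS: "\<forall>t\<in>I. \<forall>i. i \<noteq> cC \<longrightarrow> ((\<lambda>s. x S s $ i) has_real_derivative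
                 (eps t * V S t * (x S t $ i + \<delta> S i - y S t $ i)
                  + V (S-1) t * (y (S-1) t $ i - x S t $ i - \<delta> S i)) / n S t) (at t within I)"
    (* (EB) *)
    and EB1: "\<forall>t\<in>I. (H 1 has_real_derivative
                 (L 1 t * fhl (T 2 t) (x 2 t) - V 1 t * fhv (T 1 t) (y 1 t) + Q t)) (at t within I)"
    and EBj: "\<forall>t\<in>I. \<forall>j\<in>{2..S-1}. (H j has_real_derivative
                 (L j t * fhl (T (j+1) t) (x (j+1) t) - V j t * fhv (T j t) (y j t)
                  - L (j-1) t * fhl (T j t) (x j t) + V (j-1) t * fhv (T (j-1) t) (y (j-1) t)))
                 (at t within I)"
    and EBS: "\<forall>t\<in>I. (H S has_real_derivative
                 ((1 - eps t) * V S t * fhl (Tc t) (y S t) - V S t * fhv (T S t) (y S t)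
                  - L (S-1) t * fhl (T S t) (x S t) + V (S-1) t * fhv (T (S-1) t) (y (S-1) t)))
                 (at t within I)"
    (* g_delta = 0 *)
    and alg: "\<forall>t\<in>I. \<forall>r\<in>geqns S. g_delta S cC \<delta> fvle fhl fhold (eps t) (P t)
                 (\<lambda>j. n j t) (\<lambda>j. H j t) (\<lambda>j. x j t) (eta_sol cC V y T x L t) r = 0"
    (* non-degeneracy along the solution *)
    and eps_nz: "\<forall>t\<in>I. eps t \<noteq> 0"
    and n_nz: "\<forall>t\<in>I. \<forall>j\<in>{1..S}. n j t \<noteq> 0"
    and V_pos: "\<forall>t\<in>I. \<forall>j\<in>{1..S}. V j t > 0"
    and L_pos: "\<forall>t\<in>I. \<forall>j\<in>{1..<S}. L j t > 0"
    and hold_nz: "\<forall>t\<in>I. \<forall>j\<in>{1..<S}. deriv fhold (L j t) \<noteq> 0"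
    and hl_nz: "\<forall>t\<in>I. \<forall>j\<in>{1..S}. deriv (\<lambda>tt. fhl tt (x j t)) (T j t) \<noteq> 0"
  shows "\<forall>t\<in>I.
     nonsingular_on (jac_eta S cC \<delta> fvle fhl fhold (eps t) (P t)
                       (\<lambda>j. n j t) (\<lambda>j. H j t) (\<lambda>j. x j t) (eta_sol cC V y T x L t))
                    (geqns S) (avars S)
   \<and> (\<forall>j\<in>{1..<S}. (\<Sum>i\<in>UNIV. y j t $ i) =
        1 + dsum \<delta> j - (1 / V j t) * ((\<Sum>k=1..j. L k t * dsum \<delta> k)
                                      - (\<Sum>k=1..<j. V k t * (dsum \<delta> k - dsum \<delta> (k+1)))))
   \<and> (\<Sum>i\<in>UNIV. y S t $ i) =
        1 + dsum \<delta> S - (1 / (eps t * V S t)) * ((\<Sum>k=1..<S. L k t * dsum \<delta> k)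
                                      - (\<Sum>k=1..<S. V k t * (dsum \<delta> k - dsum \<delta> (k+1))))"
proof (intro ballI)
  fix t assume tI: "t \<in> I"
  define \<eta> where "\<eta> = eta_sol cC V y T x L t"
  define gg' where "gg' = g_delta S cC \<delta> fvle fhl fhold (eps t) (P t) (\<lambda>j. n j t) (\<lambda>j. H j t) (\<lambda>j. x j t)"
  define D where "D = dsum \<delta>"
  define Y where "Y j = (\<Sum>i\<in>UNIV. y j t $ i)" for j
  have etaX: "\<eta> (AX j) = x j t $ cC" for j by (simp add: \<eta>_def eta_sol_def)
  have etaY: "\<eta> (AY j i) = y j t $ i" for j i by (simp add: \<eta>_def eta_sol_def)
  have etaV: "\<eta> (AV j) = V j t" for j by (simp add: \<eta>_def eta_sol_def)
  have etaT: "\<eta> (AT j) = T j t" for j by (simp add: \<eta>_def eta_sol_def)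
  have etaL: "\<eta> (AL j) = L j t" for j by (simp add: \<eta>_def eta_sol_def)
  have xrec: "(\<chi> i. if i = cC then \<eta> (AX j) else x j t $ i) = x j t" for j
    by (simp add: etaX vec_eq_iff)
  have yrec: "(\<chi> i. \<eta> (AY j i)) = y j t" for j
    by (simp add: etaY vec_eq_iff)
  have g0: "gg' \<eta> r = 0" if "r \<in> geqns S" for r
    using alg tI that unfolding gg'_def \<eta>_def by blast
  have Dsum: "(\<Sum>i\<in>UNIV. \<delta> j i) = D j" for j by (simp add: D_def dsum_def)
  have S1: "S \<noteq> 1" "S \<noteq> 0" using S2 by auto
  have Xs: "(\<Sum>i\<in>UNIV. x j t $ i) = 1" if j: "j \<in> {1..S}" for j
  proof -
    have "gg' \<eta> (EXsum j) = 0" using g0 j by (simp add: geqns_def)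
    moreover have "gg' \<eta> (EXsum j) = x j t $ cC - 1 + (\<Sum>i\<in>UNIV-{cC}. x j t $ i)"
      unfolding gg'_def g_delta_def Let_def by (simp add: xrec)
    moreover have "(\<Sum>i\<in>UNIV. x j t $ i) = x j t $ cC + (\<Sum>i\<in>UNIV-{cC}. x j t $ i)"
      by (simp add: sum.remove)
    ultimately show ?thesis by simp
  qed
  have aux1: "L 1 t * (1 - 1 - D 1) - V 1 t * (Y 1 - 1 - D 1) = 0"
  proof -
    have "gg' \<eta> (EAux 1) = 0" using g0 S2 by (simp add: geqns_def)
    moreover have "gg' \<eta> (EAux 1) = (\<Sum>i\<in>UNIV. L 1 t * (x 2 t $ i - x 1 t $ i - \<delta> 1 i) - V 1 t * (y 1 t $ i - x 1 t $ i - \<delta> 1 i)) / n 1 t"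
      unfolding gg'_def g_delta_def Let_def by (simp add: xrec yrec etaV etaL)
    moreover have "n 1 t \<noteq> 0" using n_nz tI S2 by auto
    ultimately have "(\<Sum>i\<in>UNIV. L 1 t * (x 2 t $ i - x 1 t $ i - \<delta> 1 i) - V 1 t * (y 1 t $ i - x 1 t $ i - \<delta> 1 i)) = 0"
      by simp
    then show ?thesis unfolding sumA Y_def using Xs[of 1] Xs[of 2] S2 by (simp add: Dsum)
  qed
  have auxj: "L j t * (1 - 1 - D j) - V j t * (Y j - 1 - D j) + V (j-1) t * (Y (j-1) - 1 - D j) = 0"
    if j: "j \<in> {2..S-1}" for j
  proof -
    have j1: "j \<noteq> 1" "j \<noteq> S" "j \<noteq> 0" using j by auto
    have "gg' \<eta> (EAux j) = 0" using g0[of "EAux j"] j by (auto simp: geqns_def)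
    moreover have "gg' \<eta> (EAux j) = (\<Sum>i\<in>UNIV. L j t * (x (j+1) t $ i - x j t $ i - \<delta> j i) - V j t * (y j t $ i - x j t $ i - \<delta> j i)
                  + V (j-1) t * (y (j-1) t $ i - x j t $ i - \<delta> j i)) / n j t"
      unfolding gg'_def g_delta_def Let_def using j1 by (simp add: xrec yrec etaV etaL)
    moreover have "n j t \<noteq> 0" using n_nz tI j by auto
    ultimately have "(\<Sum>i\<in>UNIV. L j t * (x (j+1) t $ i - x j t $ i - \<delta> j i) - V j t * (y j t $ i - x j t $ i - \<delta> j i)
                  + V (j-1) t * (y (j-1) t $ i - x j t $ i - \<delta> j i)) = 0"
      by simp
    moreover have "j \<in> {1..S}" "j+1 \<in> {1..S}" using j by auto
    ultimately show ?thesis unfolding sumB Y_def using Xs by (simp add: Dsum)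
  qed
  have auxS: "eps t * V S t * (1 + D S - Y S) + V (S-1) t * (Y (S-1) - 1 - D S) = 0"
  proof -
    have "gg' \<eta> (EAux S) = 0" using g0 S2 by (simp add: geqns_def)
    moreover have "gg' \<eta> (EAux S) = (\<Sum>i\<in>UNIV. eps t * V S t * (x S t $ i + \<delta> S i - y S t $ i)
                        + V (S-1) t * (y (S-1) t $ i - x S t $ i - \<delta> S i)) / n S t"
      unfolding gg'_def g_delta_def Let_def using S1 by (simp add: xrec yrec etaV etaL)
    moreover have "n S t \<noteq> 0" using n_nz tI S2 by auto
    ultimately have "(\<Sum>i\<in>UNIV. eps t * V S t * (x S t $ i + \<delta> S i - y S t $ i)
                        + V (S-1) t * (y (S-1) t $ i - x S t $ i - \<delta> S i)) = 0"
      by simp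
    then show ?thesis unfolding sumC Y_def using Xs[of S] S2 by (simp add: Dsum)
  qed

  define A where "A j = (\<Sum>k=1..j. L k t * D k) - (\<Sum>k=1..<j. V k t * (D k - D (k+1)))" for j
  define B where "B = (\<Sum>k=1..<S. L k t * D k) - (\<Sum>k=1..<S. V k t * (D k - D (k+1)))"
  have recA: "j \<in> {1..<S} \<Longrightarrow> V j t * (Y j - 1 - D j) = - A j" for j
  proof (induction j)
    case 0 then show ?case by simp
  next
    case (Suc j)
    show ?case
    proof (cases "j = 0")
      case True
      then show ?thesis using aux1 by (simp add: A_def algebra_simps)
    next
      case False
      then have IH: "V j t * (Y j - 1 - D j) = - A j" using Suc by auto
      have jj: "Suc j \<in> {2..S-1}" using Suc.prems False by auto
      have e: "Suc j - 1 = j" by simp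
      have "A (Suc j) = A j + L (Suc j) t * D (Suc j) - V j t * (D j - D (j+1))"
        unfolding A_def using False by (simp add: sum.atLeastLessThan_Suc)
      then show ?thesis using auxj[OF jj] IH unfolding e by (simp add: algebra_simps)
    qed
  qed
  have Dpos: "k \<in> {1..S} \<Longrightarrow> D k > 0" for k
  proof (induction k)
    case 0 then show ?case by simp
  next
    case (Suc k)
    show ?case
    proof (cases "k = 0")
      case True then show ?thesis using \<delta>_pos by (simp add: D_def)
    next
      case False
      then have "D k > 0" "D k \<le> D (Suc k)" using Suc \<delta>_mono by (auto simp: D_def)
      then show ?thesis by simp
    qed
  qed
  have Vt: "j \<in> {1..S} \<Longrightarrow> V j t > 0" for j using V_pos tI by auto
  have Lt: "j \<in> {1..<S} \<Longrightarrow> L j t > 0" for j using L_pos tI by auto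
  have Dmono: "j \<in> {1..<S} \<Longrightarrow> D j \<le> D (j+1)" for j using \<delta>_mono by (auto simp: D_def)
  have posAB: "(\<Sum>k=1..j. L k t * D k) - (\<Sum>k=1..<j. V k t * (D k - D (k+1))) > 0"
    if "1 \<le> j" "j < S" for j
  proof -
    have "(\<Sum>k=1..j. L k t * D k) > 0"
      by (rule sum_pos) (use that Lt Dpos in auto)
    moreover have "(\<Sum>k=1..<j. V k t * (D k - D (k+1))) \<le> 0"
    proof (rule sum_nonpos)
      fix k assume "k \<in> {1..<j}"
      then have "V k t > 0" "D k \<le> D (k+1)" using that Vt Dmono by auto
      then show "V k t * (D k - D (k+1)) \<le> 0" by (simp add: mult_nonneg_nonpos)
    qed
    ultimately show ?thesis by linarith
  qed
  have Apos: "j \<in> {1..<S} \<Longrightarrow> A j > 0" for j unfolding A_def using posAB by auto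
  have BA: "B = A (S-1) - V (S-1) t * (D (S-1) - D S)"
  proof -
    obtain m where m: "S = Suc m" "m \<ge> 1" using S2 by (cases S) auto
    have sp: "(\<Sum>k=1..m. f k) = (\<Sum>k=1..<m. f k) + (f m :: real)" for f
      using m by (metis atLeastLessThanSuc_atLeastAtMost sum.atLeastLessThan_Suc)
    have sp2: "(\<Sum>k=1..<Suc m. f k) = (\<Sum>k=1..<m. f k) + (f m :: real)" for f
      using m by (metis sum.atLeastLessThan_Suc)
    show ?thesis unfolding B_def A_def using m by (simp only: sp sp2 diff_Suc_1) (simp add: algebra_simps)
  qed
  have Bpos: "B > 0"
  proof -
    have "A (S-1) > 0" using Apos S2 by auto
    moreover have "V (S-1) t > 0" "D (S-1) \<le> D S" using Vt Dmono[of "S-1"] S2 by auto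
    ultimately have "V (S-1) t * (D (S-1) - D S) \<le> 0" by (simp add: mult_nonneg_nonpos)
    with \<open>A (S-1) > 0\<close> show ?thesis unfolding BA by linarith
  qed
  have recS: "eps t * V S t * (Y S - 1 - D S) = - B"
  proof -
    have "V (S-1) t * (Y (S-1) - 1 - D (S-1)) = - A (S-1)" using recA[of "S-1"] S2 by auto
    then show ?thesis using auxS BA by (simp add: algebra_simps)
  qed
  have epsnz: "eps t \<noteq> 0" using eps_nz tI by auto
  have formj: "\<forall>j\<in>{1..<S}. Y j = 1 + D j - (1 / V j t) * A j"
  proof
    fix j assume j: "j \<in> {1..<S}"
    have "V j t > 0" using j Vt by auto
    with recA[OF j] show "Y j = 1 + D j - (1 / V j t) * A j" by (simp add: field_simps)
  qed
  have formS: "Y S = 1 + D S - (1 / (eps t * V S t)) * B"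
  proof -
    have "V S t > 0" using S2 Vt by auto
    with recS epsnz show ?thesis by (simp add: field_simps)
  qed
  have ns: "nonsingular_on (jac_eta S cC \<delta> fvle fhl fhold (eps t) (P t)
                       (\<lambda>j. n j t) (\<lambda>j. H j t) (\<lambda>j. x j t) \<eta>) (geqns S) (avars S)"
    unfolding nonsingular_on_def
  proof (intro conjI allI impI)
    show "finite (geqns S :: 'c geqn set)" by (rule finite_geqns)
    show fin: "finite (avars S :: 'c avar set)" by (rule finite_avars)
    show "card (geqns S :: 'c geqn set) = card (avars S :: 'c avar set)" by (rule card_eq)
    fix vv :: "'c avar \<Rightarrow> real"
    assume hv: "\<forall>r\<in>geqns S. (\<Sum>c\<in>avars S. jac_eta S cC \<delta> fvle fhl fhold (eps t) (P t)
                       (\<lambda>j. n j t) (\<lambda>j. H j t) (\<lambda>j. x j t) \<eta> r c * vv c) = 0"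
    have hv': "(\<Sum>c\<in>avars S. deriv (\<lambda>s. gg' (\<eta>(c:=s)) r) (\<eta> c) * vv c) = 0" if "r \<in> geqns S" for r
      using hv that unfolding jac_eta_def gg'_def by blast
    have vX: "vv (AX j) = 0" if j: "j \<in> {1..S}" for j
    proof -
      have mem: "AX j \<in> avars S" using j by (auto simp: avars_def)
      have cst: "\<And>c. c \<in> avars S \<Longrightarrow> c \<noteq> AX j \<Longrightarrow> (\<forall>s. gg' (\<eta>(c:=s)) (EXsum j) = gg' \<eta> (EXsum j)) \<or> vv c = 0"
        unfolding gg'_def using c_xsum by blast
      have "(\<Sum>c\<in>avars S. deriv (\<lambda>s. gg' (\<eta>(c:=s)) (EXsum j)) (\<eta> c) * vv c)
             = deriv (\<lambda>s. gg' (\<eta>(AX j:=s)) (EXsum j)) (\<eta> (AX j)) * vv (AX j)"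
        by (rule row_reduce[where G="\<lambda>e. gg' e (EXsum j)"]) (rule fin, rule mem, rule cst)
      moreover have "deriv (\<lambda>s. gg' (\<eta>(AX j:=s)) (EXsum j)) (\<eta> (AX j)) = 1"
        unfolding gg'_def by (rule d_xsum)
      moreover have "EXsum j \<in> geqns S" using j by (auto simp: geqns_def)
      ultimately show ?thesis using hv'[of "EXsum j"] by auto
    qed
    have vL: "vv (AL j) = 0" if j: "j \<in> {1..<S}" for j
    proof -
      have mem: "AL j \<in> avars S" using j by (auto simp: avars_def)
      have cst: "\<And>c. c \<in> avars S \<Longrightarrow> c \<noteq> AL j \<Longrightarrow> (\<forall>s. gg' (\<eta>(c:=s)) (EHold (Suc j)) = gg' \<eta> (EHold (Suc j))) \<or> vv c = 0"
        unfolding gg'_def using c_hold[where j="Suc j", simplified] by blast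
      have "(\<Sum>c\<in>avars S. deriv (\<lambda>s. gg' (\<eta>(c:=s)) (EHold (Suc j))) (\<eta> c) * vv c)
             = deriv (\<lambda>s. gg' (\<eta>(AL j:=s)) (EHold (Suc j))) (\<eta> (AL j)) * vv (AL j)"
        by (rule row_reduce[where G="\<lambda>e. gg' e (EHold (Suc j))"]) (rule fin, rule mem, rule cst)
      moreover have "deriv (\<lambda>s. gg' (\<eta>(AL j:=s)) (EHold (Suc j))) (\<eta> (AL j)) = - deriv fhold (\<eta> (AL j))"
        unfolding gg'_def using d_hold[where j="Suc j" and \<eta>=\<eta>] C1_diff[OF fhold_C1] by simp
      moreover have "deriv fhold (\<eta> (AL j)) \<noteq> 0" using hold_nz tI j by (simp add: etaL)
      moreover have "EHold (Suc j) \<in> geqns S" using j by (auto simp: geqns_def)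
      ultimately show ?thesis using hv'[of "EHold (Suc j)"] by auto
    qed
    have vT: "vv (AT j) = 0" if j: "j \<in> {1..S}" for j
    proof -
      have mem: "AT j \<in> avars S" using j by (auto simp: avars_def)
      have cst: "\<And>c. c \<in> avars S \<Longrightarrow> c \<noteq> AT j \<Longrightarrow> (\<forall>s. gg' (\<eta>(c:=s)) (EEdef j) = gg' \<eta> (EEdef j)) \<or> vv c = 0"
        unfolding gg'_def using c_edef vX[OF j] by metis
      have "(\<Sum>c\<in>avars S. deriv (\<lambda>s. gg' (\<eta>(c:=s)) (EEdef j)) (\<eta> c) * vv c)
             = deriv (\<lambda>s. gg' (\<eta>(AT j:=s)) (EEdef j)) (\<eta> (AT j)) * vv (AT j)"
        by (rule row_reduce[where G="\<lambda>e. gg' e (EEdef j)"]) (rule fin, rule mem, rule cst)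
      moreover have "deriv (\<lambda>s. gg' (\<eta>(AT j:=s)) (EEdef j)) (\<eta> (AT j)) = - n j t * deriv (\<lambda>tt. fhl tt (x j t)) (\<eta> (AT j))"
        unfolding gg'_def using d_edef[where j=j and \<eta>=\<eta> and X="x j t"] C1_partial[OF fhl_C1] xrec by simp
      moreover have "deriv (\<lambda>tt. fhl tt (x j t)) (\<eta> (AT j)) \<noteq> 0" using hl_nz tI j by (simp add: etaT)
      moreover have "n j t \<noteq> 0" using n_nz tI j by auto
      moreover have "EEdef j \<in> geqns S" using j by (auto simp: geqns_def)
      ultimately show ?thesis using hv'[of "EEdef j"] by auto
    qed
    have vY: "vv (AY j i) = 0" if j: "j \<in> {1..S}" for j i
    proof -
      have mem: "AY j i \<in> avars S" using j by (auto simp: avars_def)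
      have cst: "\<And>c. c \<in> avars S \<Longrightarrow> c \<noteq> AY j i \<Longrightarrow> (\<forall>s. gg' (\<eta>(c:=s)) (EYdef j i) = gg' \<eta> (EYdef j i)) \<or> vv c = 0"
        unfolding gg'_def using c_ydef vX[OF j] vT[OF j] by metis
      have "(\<Sum>c\<in>avars S. deriv (\<lambda>s. gg' (\<eta>(c:=s)) (EYdef j i)) (\<eta> c) * vv c)
             = deriv (\<lambda>s. gg' (\<eta>(AY j i:=s)) (EYdef j i)) (\<eta> (AY j i)) * vv (AY j i)"
        by (rule row_reduce[where G="\<lambda>e. gg' e (EYdef j i)"]) (rule fin, rule mem, rule cst)
      moreover have "deriv (\<lambda>s. gg' (\<eta>(AY j i:=s)) (EYdef j i)) (\<eta> (AY j i)) = 1"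
        unfolding gg'_def by (rule d_ydef)
      moreover have "EYdef j i \<in> geqns S" using j by (auto simp: geqns_def)
      ultimately show ?thesis using hv'[of "EYdef j i"] by auto
    qed
    have vV: "vv (AV j) = 0" if "j \<in> {1..S}" for j
      using that
    proof (induction j rule: less_induct)
      case (less j)
      have mem: "AV j \<in> avars S" using less.prems by (auto simp: avars_def)
      have cst: "(\<forall>s. gg' (\<eta>(c:=s)) (EAux j) = gg' \<eta> (EAux j)) \<or> vv c = 0"
        if c: "c \<in> avars S" "c \<noteq> AV j" for c
      proof (cases c)
        case (AV k)
        then have k: "k \<in> {1..S}" "k \<noteq> j" using c by (auto simp: avars_def)
        show ?thesis
        proof (cases "k < j")
          case True then have "vv (AV k) = 0" using less.IH k by auto
          then show ?thesis using AV by simp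
        next
          case False then have "k \<noteq> j - 1" "k \<noteq> j" using k by auto
          then show ?thesis using AV c_aux unfolding gg'_def by blast
        qed
      next
        case (AY j' i) then have "j' \<in> {1..S}" using c by (auto simp: avars_def)
        then show ?thesis using vY AY by auto
      next
        case (AT j') then have "j' \<in> {1..S}" using c by (auto simp: avars_def)
        then show ?thesis using vT AT by auto
      next
        case (AX j') then have "j' \<in> {1..S}" using c by (auto simp: avars_def)
        then show ?thesis using vX AX by auto
      next
        case (AL j') then have "j' \<in> {1..<S}" using c by (auto simp: avars_def)
        then show ?thesis using vL AL by auto
      qed
      have "(\<Sum>c\<in>avars S. deriv (\<lambda>s. gg' (\<eta>(c:=s)) (EAux j)) (\<eta> c) * vv c)
             = deriv (\<lambda>s. gg' (\<eta>(AV j:=s)) (EAux j)) (\<eta> (AV j)) * vv (AV j)"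
        by (rule row_reduce[where G="\<lambda>e. gg' e (EAux j)"]) (rule fin, rule mem, rule cst)
      moreover have "deriv (\<lambda>s. gg' (\<eta>(AV j:=s)) (EAux j)) (\<eta> (AV j)) \<noteq> 0"
      proof -
        have nj: "n j t \<noteq> 0" using n_nz tI less.prems by auto
        show ?thesis
        proof (cases "j = S")
          case True
          have "deriv (\<lambda>s. gg' (\<eta>(AV S:=s)) (EAux S)) (\<eta> (AV S))
                = eps t * (\<Sum>i\<in>UNIV. (\<chi> i. if i = cC then \<eta> (AX S) else x S t $ i) $ i + \<delta> S i - \<eta> (AY S i)) / n S t"
            unfolding gg'_def by (rule d_auxS[OF S1])
          also have "... = eps t * (1 + D S - Y S) / n S t"
            using Xs[of S] S2 by (simp only: xrec etaY) (simp add: sum_subtractf sum.distrib Y_def Dsum)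
          finally have e: "deriv (\<lambda>s. gg' (\<eta>(AV S:=s)) (EAux S)) (\<eta> (AV S)) = eps t * (1 + D S - Y S) / n S t" .
          have "1 + D S - Y S \<noteq> 0"
          proof
            assume "1 + D S - Y S = 0"
            then have "Y S - 1 - D S = 0" by simp
            then show False using recS Bpos by simp
          qed
          then show ?thesis using e True nj epsnz by simp
        next
          case False
          then have jS: "j \<in> {1..<S}" using less.prems by auto
          have e0: "deriv (\<lambda>s. gg' (\<eta>(AV j:=s)) (EAux j)) (\<eta> (AV j))
                = - (\<Sum>i\<in>UNIV. \<eta> (AY j i) - (\<chi> i. if i = cC then \<eta> (AX j) else x j t $ i) $ i - \<delta> j i) / n j t"
          proof (cases "j = 1")
            case True show ?thesis unfolding gg'_def True by (rule d_aux1[OF S1(1)])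
          next
            case False
            have "j \<noteq> 1" "j \<noteq> S" "j \<noteq> 0" using False jS by auto
            then show ?thesis unfolding gg'_def by (rule d_auxj)
          qed
          also have "... = - (Y j - 1 - D j) / n j t"
            using Xs[of j] jS by (simp only: xrec etaY) (simp add: sum_subtractf Y_def Dsum)
          finally have e: "deriv (\<lambda>s. gg' (\<eta>(AV j:=s)) (EAux j)) (\<eta> (AV j)) = - (Y j - 1 - D j) / n j t" .
          have "Y j - 1 - D j \<noteq> 0" using recA[OF jS] Apos[OF jS] by auto
          then show ?thesis using e nj by simp
        qed
      qed
      moreover have "EAux j \<in> geqns S" using less.prems by (auto simp: geqns_def)
      ultimately show ?case using hv'[of "EAux j"] by auto
    qed
    show "\<forall>c\<in>(avars S :: 'c avar set). vv c = 0"
    proof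
      fix c :: "'c avar" assume c: "c \<in> avars S"
      then show "vv c = 0" unfolding avars_def using vX vL vT vY vV by auto
    qed
  qed
  show "nonsingular_on (jac_eta S cC \<delta> fvle fhl fhold (eps t) (P t)
                       (\<lambda>j. n j t) (\<lambda>j. H j t) (\<lambda>j. x j t) (eta_sol cC V y T x L t))
                    (geqns S) (avars S)
   \<and> (\<forall>j\<in>{1..<S}. (\<Sum>i\<in>UNIV. y j t $ i) =
        1 + dsum \<delta> j - (1 / V j t) * ((\<Sum>k=1..j. L k t * dsum \<delta> k)
                                      - (\<Sum>k=1..<j. V k t * (dsum \<delta> k - dsum \<delta> (k+1)))))
   \<and> (\<Sum>i\<in>UNIV. y S t $ i) =
        1 + dsum \<delta> S - (1 / (eps t * V S t)) * ((\<Sum>k=1..<S. L k t * dsum \<delta> k)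
                                      - (\<Sum>k=1..<S. V k t * (dsum \<delta> k - dsum \<delta> (k+1))))"
    using ns formj formS unfolding \<eta>_def Y_def D_def A_def B_def by simp
qed


end
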